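(* Let $p:\mathbb{R}^n\to\mathbb{R}^m$ be a polynomial map with components of degree at most $d$. Then for all $r>0$, $$\sup_{x\in B_{\mathbb{R}^n}(r)}\|p(x)\|\le\alpha(d,m)\,n^d(1+r)^d\sup_{x\in B_{\mathbb{R}^n}(1)}\|p(x)\|,$$ where $\alpha(d,m)=m^{d/2}d^{2d}(d+1)$.
   Context: $B_{\mathbb{R}^n}(r)$ is the closed Euclidean ball of radius $r$ centered at $0$; $\|\cdot\|$ is the Euclidean norm. *)

theory Defs
  imports "HOL-Analysis.Analysis"
begin

definition poly_fun_deg :: "nat \<Rightarrow> (real^'n \<Rightarrow> real) \<Rightarrow> bool" where
  "poly_fun_deg d f \<longleftrightarrow>
     (\<exists>c :: ('n \<Rightarrow> nat) \<Rightarrow> real.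
        \<forall>x. f x = (\<Sum>\<alpha>\<in>{\<alpha>. sum \<alpha> UNIV \<le> d}. c \<alpha> * (\<Prod>i\<in>UNIV. (x $ i) ^ (\<alpha> i))))"

definition poly_map_deg :: "nat \<Rightarrow> (real^'n \<Rightarrow> real^'m) \<Rightarrow> bool" where
  "poly_map_deg d p \<longleftrightarrow> (\<forall>j. poly_fun_deg d (\<lambda>x. p x $ j))"

definition alpha_const :: "nat \<Rightarrow> nat \<Rightarrow> real" where
  "alpha_const d m = real m powr (real d / 2) * real d ^ (2 * d) * real (d + 1)"

end

theory Submission
  imports Defs "HOL-Computational_Algebra.Polynomial"
begin

lemma lagrange:
  fixes q :: "real poly" and xs :: "nat \<Rightarrow> real"
  assumes "degree q \<le> d" and inj: "inj_on xs {0..d}"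
  shows "poly q t = (\<Sum>k\<in>{0..d}. poly q (xs k) * (\<Prod>i\<in>{0..d}-{k}. (t - xs i)/(xs k - xs i)))"
proof -
  define Lp where "Lp k = (\<Prod>i\<in>{0..d}-{k}. [:-xs i/(xs k - xs i), 1/(xs k - xs i):])" for k
  have pL: "poly (Lp k) s = (\<Prod>i\<in>{0..d}-{k}. (s - xs i)/(xs k - xs i))" for k s
    unfolding Lp_def poly_prod by (intro prod.cong refl) (simp add: field_simps diff_divide_distrib)
  have dL: "degree (Lp k) \<le> d" if "k \<in> {0..d}" for k
  proof -
    have "degree (Lp k) \<le> sum (degree \<circ> (\<lambda>i. [:-xs i/(xs k - xs i), 1/(xs k - xs i):])) ({0..d}-{k})"
      unfolding Lp_def by (rule degree_prod_sum_le) simp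
    also have "\<dots> \<le> sum (\<lambda>i. 1) ({0..d}-{k})"
      by (intro sum_mono) simp
    also have "\<dots> \<le> d" using that by (simp add: card_Diff_singleton)
    finally show ?thesis .
  qed
  define Q where "Q = (\<Sum>k\<in>{0..d}. smult (poly q (xs k)) (Lp k))"
  have dQ: "degree Q \<le> d" unfolding Q_def
    by (intro degree_sum_le) (use dL in \<open>auto intro: order.trans[OF degree_smult_le]\<close>)
  have delta: "poly (Lp k) (xs j) = (if k = j then 1 else 0)" if "k \<in> {0..d}" "j \<in> {0..d}" for k j
  proof (cases "k = j")
    case True
    have "(\<Prod>i\<in>{0..d}-{k}. (xs j - xs i)/(xs k - xs i)) = (\<Prod>i\<in>{0..d}-{k}. 1)"
    proof (intro prod.cong refl)
      fix i assume "i \<in> {0..d}-{k}"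
      then have "xs k \<noteq> xs i" using inj that by (auto dest: inj_onD)
      then show "(xs j - xs i)/(xs k - xs i) = 1" using True by simp
    qed
    then show ?thesis using True pL by simp
  next
    case False
    then have "j \<in> {0..d}-{k}" using that by auto
    then have "(\<Prod>i\<in>{0..d}-{k}. (xs j - xs i)/(xs k - xs i)) = 0"
      by (intro prod_zero) auto
    then show ?thesis using False pL by simp
  qed
  have "q = Q"
  proof (rule poly_eqI_degree[where A="xs ` {0..d}"])
    fix x assume "x \<in> xs ` {0..d}"
    then obtain j where j: "j \<in> {0..d}" "x = xs j" by auto
    have "poly Q x = (\<Sum>k\<in>{0..d}. poly q (xs k) * (if k = j then 1 else 0))"
      unfolding Q_def poly_sum using j by (intro sum.cong refl) (simp add: delta)
    also have "\<dots> = poly q x" using j by (simp add: if_distrib cong: if_cong)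
    finally show "poly q x = poly Q x" by simp
  next
    have "card (xs ` {0..d}) = d + 1" using inj by (simp add: card_image)
    then show "degree q < card (xs ` {0..d})" "degree Q < card (xs ` {0..d})"
      using assms(1) dQ by auto
  qed
  then have "poly q t = poly Q t" by simp
  also have "\<dots> = (\<Sum>k\<in>{0..d}. poly q (xs k) * (\<Prod>i\<in>{0..d}-{k}. (t - xs i)/(xs k - xs i)))"
    unfolding Q_def poly_sum by (simp add: pL)
  finally show ?thesis .
qed

lemma finite_deg_set: "finite {\<alpha>::'n::finite \<Rightarrow> nat. sum \<alpha> UNIV \<le> d}"
proof (rule finite_subset)
  show "{\<alpha>::'n \<Rightarrow> nat. sum \<alpha> UNIV \<le> d} \<subseteq> PiE UNIV (\<lambda>_. {..d})"
  proof
    fix \<alpha> :: "'n \<Rightarrow> nat" assume a: "\<alpha> \<in> {\<alpha>. sum \<alpha> UNIV \<le> d}"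
    have "\<alpha> i \<le> d" for i
      using a member_le_sum[of i UNIV \<alpha>] by auto
    then show "\<alpha> \<in> PiE UNIV (\<lambda>_. {..d})" by auto
  qed
  show "finite (PiE (UNIV::'n set) (\<lambda>_. {..d}))" by (intro finite_PiE) auto
qed

lemma line_poly:
  fixes f :: "real^'n \<Rightarrow> real"
  assumes "poly_fun_deg d f"
  shows "\<exists>P. degree P \<le> d \<and> (\<forall>t. f (t *\<^sub>R u) = poly P t)"
proof -
  obtain c where c: "\<And>x. f x = (\<Sum>\<alpha>\<in>{\<alpha>. sum \<alpha> UNIV \<le> d}. c \<alpha> * (\<Prod>i\<in>UNIV. (x $ i) ^ (\<alpha> i)))"
    using assms unfolding poly_fun_deg_def by blast
  define P where "P = (\<Sum>\<alpha>\<in>{\<alpha>. sum \<alpha> UNIV \<le> d}. monom (c \<alpha> * (\<Prod>i\<in>UNIV. (u $ i) ^ (\<alpha> i))) (sum \<alpha> UNIV))"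
  have "degree P \<le> d" unfolding P_def
    by (intro degree_sum_le finite_deg_set) (auto intro: order.trans[OF degree_monom_le])
  moreover have "f (t *\<^sub>R u) = poly P t" for t
    unfolding c P_def poly_sum poly_monom
    by (intro sum.cong refl) (simp add: power_mult_distrib prod.distrib power_sum)
  ultimately show ?thesis by blast
qed

lemma poly_fun_cont:
  fixes f :: "real^'n \<Rightarrow> real"
  assumes "poly_fun_deg d f"
  shows "continuous_on S f"
proof -
  obtain c where c: "\<And>x. f x = (\<Sum>\<alpha>\<in>{\<alpha>. sum \<alpha> UNIV \<le> d}. c \<alpha> * (\<Prod>i\<in>UNIV. (x $ i) ^ (\<alpha> i)))"
    using assms unfolding poly_fun_deg_def by blast
  have "f = (\<lambda>x. (\<Sum>\<alpha>\<in>{\<alpha>. sum \<alpha> UNIV \<le> d}. c \<alpha> * (\<Prod>i\<in>UNIV. (x $ i) ^ (\<alpha> i))))"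
    using c by auto
  moreover have "continuous_on S (\<lambda>x. (\<Sum>\<alpha>\<in>{\<alpha>. sum \<alpha> UNIV \<le> d}. c \<alpha> * (\<Prod>i\<in>UNIV. (x $ i) ^ (\<alpha> i))))"
    by (intro continuous_intros)
  ultimately show ?thesis by simp
qed

theorem lemma4p17:
  fixes p :: "real^'n \<Rightarrow> real^'m" and d :: nat and r :: real
  assumes "poly_map_deg d p" and "r > 0"
  shows "(SUP x\<in>cball 0 r. norm (p x))
           \<le> alpha_const d CARD('m) * real CARD('n) ^ d * (1 + r) ^ d
              * (SUP x\<in>cball 0 1. norm (p x))"
proof -
  define M where "M = (SUP x\<in>cball 0 1. norm (p x))"
  have pc: "poly_fun_deg d (\<lambda>x. p x $ j)" for j
    using assms(1) unfolding poly_map_deg_def by blast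
  have "continuous_on UNIV (\<lambda>x. \<chi> j. p x $ j)"
    by (intro continuous_on_vec_lambda poly_fun_cont[OF pc])
  then have cont: "continuous_on UNIV p" by simp
  have "compact (p ` cball 0 1)"
    by (intro compact_continuous_image continuous_on_subset[OF cont]) auto
  then obtain B where B: "\<And>y. y \<in> p ` cball 0 1 \<Longrightarrow> norm y \<le> B"
    using compact_imp_bounded bounded_iff by metis
  have bdd: "bdd_above ((\<lambda>x. norm (p x)) ` cball 0 1)"
    using B by (intro bdd_aboveI[where M=B]) auto
  have leM: "norm (p x) \<le> M" if "x \<in> cball 0 1" for x
    unfolding M_def by (rule cSUP_upper[OF that bdd])
  have M0: "0 \<le> M" using leM[of 0] by (simp add: order.trans[OF norm_ge_zero])
  define xs where "xs k = -1 + 2 * real k / real d" for k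
  define C where "C = (1 + r) * real (max 1 d)"
  have C1: "1 \<le> C" unfolding C_def using assms(2)
    by (metis (mono_tags, lifting) add_increasing2 le_add_same_cancel1 less_imp_le max.cobounded1 mult_mono of_nat_1 of_nat_le_iff
        linorder_not_le nat_le_linear order.trans mult_1_right zero_le_one)
  have xs_bd: "\<bar>xs k\<bar> \<le> 1" if "k \<in> {0..d}" for k
  proof (cases "d = 0")
    case True then show ?thesis by (simp add: xs_def)
  next
    case False
    have "real k \<le> real d" using that by simp
    then have "2 * real k / real d \<le> 2" using False by (simp add: divide_le_eq)
    moreover have "0 \<le> 2 * real k / real d" by simp
    ultimately show ?thesis unfolding xs_def by linarith
  qed
  have inj: "inj_on xs {0..d}"
  proof (cases "d = 0")
    case True then show ?thesis by simp
  next
    case False then show ?thesis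
      unfolding inj_on_def xs_def by (auto simp: field_simps)
  qed
  have Lbd: "\<bar>\<Prod>i\<in>{0..d}-{k}. (t - xs i)/(xs k - xs i)\<bar> \<le> C ^ d"
    if k: "k \<in> {0..d}" and t: "0 \<le> t" "t \<le> r" for k t
  proof -
    have "\<bar>\<Prod>i\<in>{0..d}-{k}. (t - xs i)/(xs k - xs i)\<bar> = (\<Prod>i\<in>{0..d}-{k}. \<bar>(t - xs i)/(xs k - xs i)\<bar>)"
      by (rule abs_prod)
    also have "\<dots> \<le> C ^ d"
    proof (rule prod_le_power)
      fix i assume i: "i \<in> {0..d}-{k}"
      then have dpos: "d \<noteq> 0" using k by auto
      have "xs k - xs i = 2 * (real k - real i) / real d" unfolding xs_def by (simp add: diff_divide_distrib)
      moreover have "1 \<le> \<bar>real k - real i\<bar>" using i by auto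
      ultimately have den: "2 / real d \<le> \<bar>xs k - xs i\<bar>" using dpos
        by (simp add: abs_div divide_right_mono)
      have num: "\<bar>t - xs i\<bar> \<le> 1 + r" using xs_bd[of i] i t by auto
      have dp: "0 < 2 / real d" using dpos by simp
      have "\<bar>(t - xs i)/(xs k - xs i)\<bar> = \<bar>t - xs i\<bar> / \<bar>xs k - xs i\<bar>" by (simp add: abs_div)
      also have "\<dots> \<le> (1 + r) / (2 / real d)"
        using num den dp by (intro frac_le) auto
      also have "\<dots> \<le> C" unfolding C_def using dpos assms(2) by (simp add: field_simps)
      finally show "0 \<le> \<bar>(t - xs i)/(xs k - xs i)\<bar> \<and> \<bar>(t - xs i)/(xs k - xs i)\<bar> \<le> C" by simp
    next
      show "card ({0..d}-{k}) \<le> d" using k by (simp add: card_Diff_singleton)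
    qed (use C1 in auto)
    finally show ?thesis .
  qed
  have main: "norm (p x) \<le> real (d + 1) * C ^ d * M" if x: "x \<in> cball 0 r" for x
  proof -
    define t where "t = norm x"
    define u where "u = sgn x"
    have xtu: "x = t *\<^sub>R u" unfolding t_def u_def
      by (cases "x = 0") (simp_all add: sgn_div_norm)
    have u1: "norm u \<le> 1" unfolding u_def by (simp add: norm_sgn)
    have t: "0 \<le> t" "t \<le> r" using x by (auto simp: t_def)
    define L where "L k = (\<Prod>i\<in>{0..d}-{k}. (t - xs i)/(xs k - xs i))" for k
    have comp: "p (t *\<^sub>R u) $ j = (\<Sum>k\<in>{0..d}. L k * p (xs k *\<^sub>R u) $ j)" for j
    proof -
      obtain P where P: "degree P \<le> d" "\<And>s. p (s *\<^sub>R u) $ j = poly P s"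
        using line_poly[OF pc[of j], of u] by blast
      show ?thesis unfolding P(2) L_def using lagrange[OF P(1) inj, of t]
        by (simp add: mult.commute)
    qed
    have "p x = (\<Sum>k\<in>{0..d}. L k *\<^sub>R p (xs k *\<^sub>R u))"
      unfolding xtu by (simp add: vec_eq_iff comp sum_component)
    then have "norm (p x) \<le> (\<Sum>k\<in>{0..d}. norm (L k *\<^sub>R p (xs k *\<^sub>R u)))"
      by (metis norm_sum)
    also have "\<dots> \<le> (\<Sum>k\<in>{0..d}. C ^ d * M)"
    proof (intro sum_mono)
      fix k assume k: "k \<in> {0..d}"
      have "norm (xs k *\<^sub>R u) \<le> 1"
        using xs_bd[OF k] u1 by (simp add: mult_le_one)
      then have "norm (p (xs k *\<^sub>R u)) \<le> M" by (intro leM) simp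
      moreover have "\<bar>L k\<bar> \<le> C ^ d" unfolding L_def by (rule Lbd[OF k t])
      ultimately show "norm (L k *\<^sub>R p (xs k *\<^sub>R u)) \<le> C ^ d * M"
        by (simp add: mult_mono')
    qed
    also have "\<dots> = real (d + 1) * C ^ d * M" by simp
    finally show ?thesis .
  qed
  have coef: "real (d + 1) * C ^ d \<le> alpha_const d CARD('m) * real CARD('n) ^ d * (1 + r) ^ d"
  proof -
    have m1: "1 \<le> real CARD('m) powr (real d / 2)"
      by (rule ge_one_powr_ge_zero) auto
    have n1: "1 \<le> real CARD('n) ^ d" by (simp add: one_le_power)
    have dd: "real (max 1 d) ^ d \<le> real d ^ (2 * d)"
    proof (cases "d = 0")
      case True then show ?thesis by simp
    next
      case False
      then have "real (max 1 d) ^ d = real d ^ d" by (simp add: max_def)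
      also have "\<dots> \<le> real d ^ (2 * d)" using False by (intro power_increasing) auto
      finally show ?thesis .
    qed
    have "real (d + 1) * C ^ d = real (d + 1) * real (max 1 d) ^ d * (1 + r) ^ d"
      unfolding C_def by (simp add: power_mult_distrib)
    also have "\<dots> \<le> real (d + 1) * real d ^ (2 * d) * (1 + r) ^ d"
      using dd assms(2) by (intro mult_right_mono mult_left_mono) auto
    also have "\<dots> \<le> (real CARD('m) powr (real d / 2) * real CARD('n) ^ d) * (real (d + 1) * real d ^ (2 * d) * (1 + r) ^ d)"
    proof -
      have "1 \<le> real CARD('m) powr (real d / 2) * real CARD('n) ^ d"
        using m1 n1 by (metis mult_mono' mult_1_right zero_le_one order.trans)
      moreover have "0 \<le> real (d + 1) * real d ^ (2 * d) * (1 + r) ^ d" using assms(2) by simp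
      ultimately show ?thesis by (metis mult_right_mono mult_1)
    qed
    also have "\<dots> = alpha_const d CARD('m) * real CARD('n) ^ d * (1 + r) ^ d"
      unfolding alpha_const_def by (simp add: algebra_simps)
    finally show ?thesis .
  qed
  have "(SUP x\<in>cball 0 r. norm (p x)) \<le> real (d + 1) * C ^ d * M"
    using assms(2) by (intro cSUP_least main) auto
  also have "\<dots> \<le> alpha_const d CARD('m) * real CARD('n) ^ d * (1 + r) ^ d * M"
    using coef M0 by (rule mult_right_mono)
  finally show ?thesis unfolding M_def .
qed

end
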